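(* Let $n\ge2$, $1\le k\le n-1$. Let $Y$ have a continuous distribution function $G$ on $[l_G,r_G]$, and let $g$ be continuous and strictly increasing on $(l_G,r_G)$ with $g(l_G^+):=\lim_{y\to l_G^+}g(y)>-\infty$ and $\lim_{y\to r_G^-}g(y)=\infty$. Then \[ E[g(Y(n))\mid Y(n-k)=s,\ Y(n+1)=t]=\frac{k\,g(t)+g(s)}{k+1}\qquad (l_G<s<t<r_G) \] holds if and only if $G(y)=1-e^{-c[g(y)-g(l_G^+)]}$ for $l_G<y<r_G$, for some constant $c>0$.
   Context: $Y_1,Y_2,\dots$ are i.i.d. copies of $Y$ with distribution function $G$; $l_G=\inf\{y:G(y)>0\}$, $r_G=\sup\{y:G(y)<1\}$. Upper record times $L(1)=1$, $L(m)=\min\{j>L(m-1):Y_j>Y_{L(m-1)}\}$, record values $Y(m)=Y_{L(m)}$. With $R(y)=-\ln(1-G(y))$, conditional expectations given $Y(n-k)=s$, $Y(n+1)=t$ use the conditional density of $Y(n)$: $k[\frac{R(x)-R(s)}{R(t)-R(s)}]^{k-1}\frac{R'(x)}{R(t)-R(s)}$, $s<x<t$. *)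

theory Defs
  imports "HOL-Analysis.Analysis"
begin

definition cont_dist_fun :: "(real \<Rightarrow> real) \<Rightarrow> bool" where
  "cont_dist_fun G \<longleftrightarrow> mono G \<and> continuous_on UNIV G \<and>
     (G \<longlongrightarrow> 0) at_bot \<and> (G \<longlongrightarrow> 1) at_top"

definition lG :: "(real \<Rightarrow> real) \<Rightarrow> ereal" where
  "lG G = Inf {ereal y | y. G y > 0}"

definition rG :: "(real \<Rightarrow> real) \<Rightarrow> ereal" where
  "rG G = Sup {ereal y | y. G y < 1}"

definition at_right_e :: "ereal \<Rightarrow> real filter" where
  "at_right_e l = (if l = -\<infinity> then at_bot else at_right (real_of_ereal l))"

definition at_left_e :: "ereal \<Rightarrow> real filter" where
  "at_left_e r = (if r = \<infinity> then at_top else at_left (real_of_ereal r))"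

definition hazR :: "(real \<Rightarrow> real) \<Rightarrow> real \<Rightarrow> real" where
  "hazR G y = - ln (1 - G y)"

text \<open>Conditional distribution function of Y(n) given Y(n-k)=s, Y(n+1)=t:
  on (s,t) it is ((R x - R s)/(R t - R s))^k (whose derivative is the
  conditional density k[(R x-R s)/(R t-R s)]^(k-1) R'(x)/(R t-R s)).\<close>
definition cond_cdf :: "(real \<Rightarrow> real) \<Rightarrow> nat \<Rightarrow> real \<Rightarrow> real \<Rightarrow> real \<Rightarrow> real" where
  "cond_cdf G k s t x =
     (if x \<le> s then 0 else if t \<le> x then 1
      else ((hazR G x - hazR G s) / (hazR G t - hazR G s)) ^ k)"

text \<open>E[g(Y(n)) | Y(n-k)=s, Y(n+1)=t], as Lebesgue--Stieltjes integral
  against the conditional distribution.\<close>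
definition cond_exp_rec ::
  "(real \<Rightarrow> real) \<Rightarrow> nat \<Rightarrow> (real \<Rightarrow> real) \<Rightarrow> real \<Rightarrow> real \<Rightarrow> real" where
  "cond_exp_rec G k g s t =
     (LINT x:{s<..<t}|interval_measure (cond_cdf G k s t). g x)"

end

theory Submission
  imports Defs
begin


lemma im_mono_cont:
  assumes "mono F" "continuous_on UNIV F"
  shows "\<And>x y. x \<le> y \<Longrightarrow> F x \<le> F y" and "\<And>a. continuous (at_right a) F"
  using assms by (auto simp: monoD continuous_on_eq_continuous_within continuous_at_imp_continuous_at_within)

lemma im_Ioc:
  assumes "mono F" "continuous_on UNIV F" "a \<le> b"
  shows "emeasure (interval_measure F) {a<..b} = ennreal (F b - F a)"
  using emeasure_interval_measure_Ioc[OF assms(3) im_mono_cont[OF assms(1,2)]] by simp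

lemma im_point:
  assumes "mono F" "continuous_on UNIV F"
  shows "emeasure (interval_measure F) {x} = 0"
proof -
  have "emeasure (interval_measure F) {x..x} = ennreal (F x - F x)"
    by (rule emeasure_interval_measure_Icc) (use assms in \<open>auto simp: monoD\<close>)
  then show ?thesis by simp
qed

lemma im_Ioo:
  assumes "mono F" "continuous_on UNIV F" "a \<le> b"
  shows "emeasure (interval_measure F) {a<..<b} = ennreal (F b - F a)"
proof (cases "a = b")
  case True then show ?thesis by simp
next
  case False
  then have eq: "{a<..b} = {a<..<b} \<union> {b}" using assms(3) by auto
  have "emeasure (interval_measure F) {a<..b} = emeasure (interval_measure F) {a<..<b} + emeasure (interval_measure F) {b}"
    unfolding eq by (rule plus_emeasure[symmetric]) auto
  then show ?thesis using im_Ioc[OF assms] im_point[OF assms(1,2)] by simp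
qed

lemma im_fin:
  assumes "mono F" "continuous_on UNIV F" "A \<subseteq> {u..w}" 
  shows "emeasure (interval_measure F) A < \<infinity>"
proof (cases "A = {}")
  case True then show ?thesis by simp
next
  case False
  have "emeasure (interval_measure F) A \<le> emeasure (interval_measure F) {u-1<..w}"
    by (rule emeasure_mono) (use assms(3) in auto)
  also have "\<dots> = ennreal (F w - F (u-1))"
    using assms(3) False by (auto intro!: im_Ioc[OF assms(1,2)])
  finally show ?thesis by (simp add: order_le_less_trans)
qed

lemma im_set_integrable:
  assumes "mono F" "continuous_on UNIV F" "A \<in> sets borel" "A \<subseteq> {u..w}" "continuous_on {u..w} f"
  shows "set_integrable (interval_measure F) A (f::real\<Rightarrow>real)"
proof -
  have "compact (f ` {u..w})" by (rule compact_continuous_image[OF assms(5)]) auto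
  then have "bounded (f ` {u..w})" by (rule compact_imp_bounded)
  then obtain B where B0: "\<forall>y\<in>f ` {u..w}. norm y \<le> B" unfolding bounded_iff by blast
  have B: "norm (f x) \<le> B" if "x \<in> {u..w}" for x using B0 that by blast
  have fin: "emeasure (interval_measure F) A < \<infinity>" by (rule im_fin[OF assms(1,2,4)])
  have ci: "set_integrable (interval_measure F) A (\<lambda>_. B)"
    unfolding set_integrable_def
  proof (rule integrable_scaleR_left, rule integrable_real_indicator)
    show "A \<in> sets (interval_measure F)" using assms(3) by simp
  qed (rule fin)
  have "(\<lambda>x. indicator A x *\<^sub>R f x) \<in> borel_measurable borel"
    by (rule borel_measurable_continuous_on_indicator[OF assms(3)])
       (rule continuous_on_subset[OF assms(5,4)])
  then have "set_borel_measurable (interval_measure F) A f"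
    unfolding set_borel_measurable_def by (simp only: measurable_cong_sets[OF sets_interval_measure refl])
  then show ?thesis
    proof (rule set_integrable_bound[OF ci])
    show "AE x in interval_measure F. x \<in> A \<longrightarrow> norm (f x) \<le> norm B"
    proof (rule AE_I2, rule impI)
      fix x assume "x \<in> A"
      then have "norm (f x) \<le> B" using B assms(4) by blast
      then show "norm (f x) \<le> norm B" by simp
    qed
  qed
qed

lemma im_measure_Ioo:
  assumes "mono F" "continuous_on UNIV F" "u \<le> w"
  shows "measure (interval_measure F) {u<..<w} = F w - F u"
  using im_Ioo[OF assms] assms by (simp add: measure_def monoD)

lemma im_bnd:
  assumes "mono F" "continuous_on UNIV F" "u \<le> w" "continuous_on {u..w} f"
    "\<And>x. x \<in> {u<..<w} \<Longrightarrow> m \<le> f x \<and> f x \<le> M"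
  shows "m * (F w - F u) \<le> (LINT x:{u<..<w}|interval_measure F. f x)"
    "(LINT x:{u<..<w}|interval_measure F. f x) \<le> M * (F w - F u)"
proof -
  let ?\<mu> = "interval_measure F"
  have fin: "emeasure ?\<mu> {u<..<w} \<noteq> \<infinity>" using im_Ioo[OF assms(1-3)] by simp
  have i: "set_integrable ?\<mu> {u<..<w} h" if "continuous_on {u..w} h" for h :: "real \<Rightarrow> real"
    by (rule im_set_integrable[OF assms(1,2), where u=u and w=w]) (use that in auto)
  have "(LINT x:{u<..<w}|?\<mu>. m) \<le> (LINT x:{u<..<w}|?\<mu>. f x)"
    by (rule set_integral_mono[OF i i]) (use assms(4,5) in simp_all)
  then show "m * (F w - F u) \<le> (LINT x:{u<..<w}|interval_measure F. f x)"
    using set_integral_const[OF _ fin, of m] im_measure_Ioo[OF assms(1-3)] by (simp add: mult.commute)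
  have "(LINT x:{u<..<w}|?\<mu>. f x) \<le> (LINT x:{u<..<w}|?\<mu>. M)"
    by (rule set_integral_mono[OF i i]) (use assms(4,5) in simp_all)
  then show "(LINT x:{u<..<w}|interval_measure F. f x) \<le> M * (F w - F u)"
    using set_integral_const[OF _ fin, of M] im_measure_Ioo[OF assms(1-3)] by (simp add: mult.commute)
qed

lemma borel_meas_eq_Ioc:
  fixes M N :: "real measure"
  assumes "sets M = sets borel" "sets N = sets borel"
    and eq: "\<And>a b. a \<le> b \<Longrightarrow> emeasure M {a<..b} = emeasure N {a<..b}"
    and fin: "\<And>a b. a \<le> b \<Longrightarrow> emeasure M {a<..b} \<noteq> \<infinity>"
  shows "M = N"
proof (rule measure_eqI_generator_eq[where \<Omega>=UNIV and E="range (\<lambda>(a, b). {a<..b::real})"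
      and A="\<lambda>i. {- real i<..real i}"])
  fix X assume "X \<in> range (\<lambda>(a, b). {a<..b::real})"
  then obtain a b where Xeq: "X = {a<..b}" by auto
  then show "emeasure M X = emeasure N X"
    by (cases "a \<le> b") (simp_all add: eq)
next
  show "(\<Union>i. {- real (i::nat)<..real i}) = UNIV"
  proof (intro set_eqI iffI)
    fix x :: real
    obtain n :: nat where "\<bar>x\<bar> < real n" using reals_Archimedean2 by blast
    then show "x \<in> (\<Union>i. {- real (i::nat)<..real i})" by (intro UN_I[of n]) auto
  qed auto
next
  fix i :: nat show "emeasure M {- real i<..real i} \<noteq> \<infinity>" by (rule fin) simp
qed (auto simp: assms(1,2) borel_sigma_sets_Ioc Int_stable_def)

lemma im_prop:
  fixes F1 F2 f :: "real \<Rightarrow> real"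
  assumes m1: "mono F1" "continuous_on UNIV F1" and m2: "mono F2" "continuous_on UNIV F2"
    and "u \<le> w" "c \<ge> 0"
    and hprop: "\<And>x y. u \<le> x \<Longrightarrow> x \<le> y \<Longrightarrow> y \<le> w \<Longrightarrow> F1 y - F1 x = c * (F2 y - F2 x)"
    and meas: "(\<lambda>x. indicator {u<..w} x *\<^sub>R f x) \<in> borel_measurable borel"
  shows "(LINT x:{u<..w}|interval_measure F1. f x) = c * (LINT x:{u<..w}|interval_measure F2. f x)"
proof -
  define S where "S = {u<..w}"
  define N1 where "N1 = density (interval_measure F1) (\<lambda>x. ennreal (indicator S x))"
  define N2 where "N2 = density (interval_measure F2) (\<lambda>x. ennreal (c * indicator S x))"
  have SI: "S \<inter> {a<..b} = {max u a<..min w b}" for a b unfolding S_def by auto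
  have e1: "emeasure N1 A = emeasure (interval_measure F1) (S \<inter> A)" if "A \<in> sets borel" for A
  proof -
    have "emeasure N1 A = (\<integral>\<^sup>+ x. ennreal (indicator S x) * indicator A x \<partial>interval_measure F1)"
      unfolding N1_def using that by (subst emeasure_density) (auto simp: S_def)
    also have "\<dots> = (\<integral>\<^sup>+ x. indicator (S \<inter> A) x \<partial>interval_measure F1)"
      by (rule nn_integral_cong) (simp split: split_indicator)
    also have "\<dots> = emeasure (interval_measure F1) (S \<inter> A)"
      using that by (subst nn_integral_indicator) (auto simp: S_def)
    finally show ?thesis .
  qed
  have e2: "emeasure N2 A = ennreal c * emeasure (interval_measure F2) (S \<inter> A)" if "A \<in> sets borel" for A
  proof -
    have "emeasure N2 A = (\<integral>\<^sup>+ x. ennreal (c * indicator S x) * indicator A x \<partial>interval_measure F2)"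
      unfolding N2_def using that by (subst emeasure_density) (auto simp: S_def)
    also have "\<dots> = (\<integral>\<^sup>+ x. ennreal c * indicator (S \<inter> A) x \<partial>interval_measure F2)"
      by (rule nn_integral_cong) (simp split: split_indicator)
    also have "\<dots> = ennreal c * emeasure (interval_measure F2) (S \<inter> A)"
      using that by (subst nn_integral_cmult_indicator) (auto simp: S_def)
    finally show ?thesis .
  qed
  have "N1 = N2"
  proof (rule borel_meas_eq_Ioc)
    show "sets N1 = sets borel" "sets N2 = sets borel" unfolding N1_def N2_def by simp_all
  next
    fix a b :: real assume "a \<le> b"
    show "emeasure N1 {a<..b} = emeasure N2 {a<..b}"
    proof (cases "max u a \<le> min w b")
      case True
      have "emeasure N1 {a<..b} = ennreal (F1 (min w b) - F1 (max u a))"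
        by (simp add: e1 SI im_Ioc[OF m1 True])
      also have "\<dots> = ennreal c * ennreal (F2 (min w b) - F2 (max u a))"
      proof -
        have "F2 (max u a) \<le> F2 (min w b)" using True by (rule monoD[OF m2(1)])
        then show ?thesis
          using hprop[of "max u a" "min w b"] True \<open>u \<le> w\<close> \<open>a \<le> b\<close> \<open>c \<ge> 0\<close>
          by (simp add: ennreal_mult[symmetric])
      qed
      also have "\<dots> = emeasure N2 {a<..b}"
        by (simp add: e2 SI im_Ioc[OF m2 True])
      finally show ?thesis .
    next
      case False
      then have em: "S \<inter> {a<..b} = {}" unfolding SI by auto
      have "emeasure N1 {a<..b} = 0" using e1[of "{a<..b}"] em by simp
      moreover have "emeasure N2 {a<..b} = 0" using e2[of "{a<..b}"] em by simp
      ultimately show ?thesis by simp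
    qed
    show "emeasure N1 {a<..b} \<noteq> \<infinity>"
    proof (cases "max u a \<le> min w b")
      case True then show ?thesis by (simp add: e1 SI im_Ioc[OF m1 True])
    next
      case False
      then have em: "S \<inter> {a<..b} = {}" unfolding SI by auto
      show ?thesis using e1[of "{a<..b}"] em by simp
    qed
  qed
  have meas1: "(\<lambda>x. indicator S x *\<^sub>R f x) \<in> borel_measurable (interval_measure F)" for F
    using meas unfolding S_def by (simp only: measurable_cong_sets[OF sets_interval_measure refl])
  have gm: "(\<lambda>x. indicator S x :: real) \<in> borel_measurable (interval_measure F)" for F
    by (simp add: S_def)
  have "integral\<^sup>L N1 (\<lambda>x. indicator S x *\<^sub>R f x) =
      integral\<^sup>L (interval_measure F1) (\<lambda>x. indicator S x *\<^sub>R (indicator S x *\<^sub>R f x))"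
    unfolding N1_def by (rule integral_density[OF meas1 gm]) simp
  also have "\<dots> = (LINT x:S|interval_measure F1. f x)"
    unfolding set_lebesgue_integral_def by (rule Bochner_Integration.integral_cong) (auto split: split_indicator)
  finally have i1: "(LINT x:S|interval_measure F1. f x) = integral\<^sup>L N1 (\<lambda>x. indicator S x *\<^sub>R f x)" ..
  have gm2: "(\<lambda>x. c * indicator S x :: real) \<in> borel_measurable (interval_measure F2)"
    by (simp add: S_def)
  have "integral\<^sup>L N2 (\<lambda>x. indicator S x *\<^sub>R f x) =
      integral\<^sup>L (interval_measure F2) (\<lambda>x. (c * indicator S x) *\<^sub>R (indicator S x *\<^sub>R f x))"
    unfolding N2_def by (rule integral_density[OF meas1 gm2]) (simp add: \<open>c \<ge> 0\<close>)
  also have "\<dots> = integral\<^sup>L (interval_measure F2) (\<lambda>x. c * (indicator S x *\<^sub>R f x))"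
    by (rule Bochner_Integration.integral_cong) (auto split: split_indicator)
  also have "\<dots> = c * (LINT x:S|interval_measure F2. f x)"
    unfolding set_lebesgue_integral_def by (rule integral_mult_right_zero)
  finally have i2: "integral\<^sup>L N2 (\<lambda>x. indicator S x *\<^sub>R f x) = c * (LINT x:S|interval_measure F2. f x)" .
  have "(LINT x:S|interval_measure F1. f x) = c * (LINT x:S|interval_measure F2. f x)"
    using i1 i2 \<open>N1 = N2\<close> by simp
  then show ?thesis unfolding S_def .
qed

lemma im_Ioc_Ioo:
  fixes f :: "real \<Rightarrow> real"
  assumes "mono F" "continuous_on UNIV F" "u \<le> w" "continuous_on {u..w} f"
  shows "(LINT x:{u<..w}|interval_measure F. f x) = (LINT x:{u<..<w}|interval_measure F. f x)"
proof -
  have m: "set_borel_measurable (interval_measure F) A f" if "A \<subseteq> {u..w}" "A \<in> sets borel" for A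
  proof -
    have "(\<lambda>x. indicator A x *\<^sub>R f x) \<in> borel_measurable borel"
      by (rule borel_measurable_continuous_on_indicator[OF that(2)])
         (rule continuous_on_subset[OF assms(4) that(1)])
    then show ?thesis
      unfolding set_borel_measurable_def by (simp only: measurable_cong_sets[OF sets_interval_measure refl])
  qed
  have "AE x in interval_measure F. x \<in> {u<..<w} \<longleftrightarrow> x \<in> {u<..w}"
  proof (rule AE_I')
    show "{w} \<in> null_sets (interval_measure F)"
      using im_point[OF assms(1,2), of w] by (simp add: null_sets_def)
  qed auto
  moreover have "set_borel_measurable (interval_measure F) {u<..<w} f" by (rule m) auto
  moreover have "set_borel_measurable (interval_measure F) {u<..w} f" by (rule m) (use assms(3) in auto)
  ultimately show ?thesis
    using set_integral_cong_set[where A="{u<..<w}" and B="{u<..w}" and M="interval_measure F" and f=f] by blast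
qed

lemma R_mono:
  assumes "mono G" "G y < 1" "x \<le> y"
  shows "hazR G x \<le> hazR G y"
proof -
  have "G x \<le> G y" using assms by (simp add: monoD)
  then show ?thesis unfolding hazR_def using assms(2) by simp
qed

lemma R_strict:
  assumes "G y < 1" "G x < G y"
  shows "hazR G x < hazR G y"
  unfolding hazR_def using assms by simp

lemma R_cont:
  assumes "mono G" "continuous_on UNIV G" "G t < 1"
  shows "continuous_on {..t} (hazR G)"
proof -
  have "\<forall>x\<in>{..t}. 1 - G x \<noteq> 0"
    using assms by (auto dest: monoD[OF assms(1)])
  then show ?thesis unfolding hazR_def
    by (intro continuous_intros continuous_on_subset[OF assms(2)]) auto
qed

lemma phi_eq:
  assumes "s < t" "k \<ge> 1" "hazR G s < hazR G t"
  shows "cond_cdf G k s t = (\<lambda>x. ((hazR G (max s (min t x)) - hazR G s) / (hazR G t - hazR G s)) ^ k)"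
proof
  fix x
  show "cond_cdf G k s t x = ((hazR G (max s (min t x)) - hazR G s) / (hazR G t - hazR G s)) ^ k"
    using assms by (auto simp: cond_cdf_def max_def min_def)
qed

lemma phi_in:
  assumes "s < t" "k \<ge> 1" "hazR G s < hazR G t" "s \<le> x" "x \<le> t"
  shows "cond_cdf G k s t x = (hazR G x - hazR G s) ^ k / (hazR G t - hazR G s) ^ k"
  using assms by (simp add: phi_eq power_divide max_def min_def)

lemma phi_props:
  assumes "mono G" "continuous_on UNIV G" "G t < 1" "s < t" "k \<ge> 1" "G s < G t"
  shows "mono (cond_cdf G k s t)" "continuous_on UNIV (cond_cdf G k s t)"
proof -
  let ?R = "hazR G"
  have Rst: "?R s < ?R t" by (rule R_strict[of G t s, OF assms(3,6)])
  let ?c = "\<lambda>x. max s (min t x)"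
  have cr: "?c x \<in> {s..t}" for x using assms(4) by auto
  have Gc: "G (?c y) < 1" for y using monoD[OF assms(1), of "?c y" t] assms(3) cr[of y] by auto
  show "mono (cond_cdf G k s t)"
    unfolding phi_eq[OF assms(4,5) Rst]
  proof (rule monoI)
    fix x y :: real assume "x \<le> y"
    then have "?c x \<le> ?c y" by auto
    then have "?R (?c x) \<le> ?R (?c y)" by (intro R_mono[OF assms(1) Gc])
    moreover have "?R s \<le> ?R (?c x)" using cr[of x] by (intro R_mono[OF assms(1) Gc]) auto
    ultimately show "((?R (?c x) - ?R s) / (?R t - ?R s)) ^ k \<le> ((?R (?c y) - ?R s) / (?R t - ?R s)) ^ k"
      using Rst by (intro power_mono divide_right_mono) auto
  qed
  have "continuous_on UNIV (\<lambda>x. ?R (?c x))"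
  proof (rule continuous_on_compose2[OF R_cont[OF assms(1-3)]])
    show "continuous_on UNIV ?c" by (intro continuous_intros)
  qed (use cr in auto)
  then show "continuous_on UNIV (cond_cdf G k s t)"
    unfolding phi_eq[OF assms(4,5) Rst] by (intro continuous_intros) (use Rst in auto)
qed

lemma E_bnd:
  assumes "mono G" "continuous_on UNIV G" "G t < 1" "s < t" "k \<ge> 1" "G s < G t"
    and g: "continuous_on {s..t} g" "\<And>x. x \<in> {s<..<t} \<Longrightarrow> g s \<le> g x \<and> g x \<le> g t"
  shows "g s \<le> cond_exp_rec G k g s t" "cond_exp_rec G k g s t \<le> g t"
proof -
  note P = phi_props[OF assms(1-6)]
  have Rst: "hazR G s < hazR G t" by (rule R_strict[of G t s, OF assms(3,6)])
  have "cond_cdf G k s t t - cond_cdf G k s t s = 1"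
    using Rst assms(4,5) by (simp add: phi_in)
  then show "g s \<le> cond_exp_rec G k g s t" "cond_exp_rec G k g s t \<le> g t"
    unfolding cond_exp_rec_def using im_bnd[OF P _ g(1), of "g s" "g t"] assms(4) g(2) by auto
qed

lemma sandwich:
  assumes G: "mono G" "continuous_on UNIV G" and st: "s < t" "t < t'" "G s < G t" "G t' < 1" "k \<ge> 1" "G t < G t'"
    and g: "continuous_on {s..t'} g" "\<And>x y. s \<le> x \<Longrightarrow> x \<le> y \<Longrightarrow> y \<le> t' \<Longrightarrow> g x \<le> g y"
  defines "p \<equiv> (hazR G t - hazR G s) ^ k" and "p' \<equiv> (hazR G t' - hazR G s) ^ k"
  shows "g t * (p' - p) \<le> p' * cond_exp_rec G k g s t' - p * cond_exp_rec G k g s t"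
    and "p' * cond_exp_rec G k g s t' - p * cond_exp_rec G k g s t \<le> g t' * (p' - p)"
proof -
  let ?R = "hazR G"
  have Gt: "G t < 1" using monoD[OF G(1), of t t'] st by auto
  have Gst': "G s < G t'" using st by auto
  note P = phi_props[OF G Gt st(1) st(5) st(3)]
  note P' = phi_props[OF G st(4) _ st(5) Gst'] 
  note P' = P'[OF order.strict_trans[OF st(1,2)]]
  have Rst: "?R s < ?R t" by (rule R_strict[of G t s, OF Gt st(3)])
  have Rtt: "?R t < ?R t'" by (rule R_strict[of G t' t, OF st(4,6)])
  have pp: "0 < p" "p < p'" unfolding p_def p'_def using Rst Rtt st(5)
    by (auto intro!: power_strict_mono)
  let ?\<mu> = "interval_measure (cond_cdf G k s t)"
  let ?\<mu>' = "interval_measure (cond_cdf G k s t')"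
  have ph: "cond_cdf G k s t x = (?R x - ?R s) ^ k / p" if "s \<le> x" "x \<le> t" for x
    using phi_in[OF st(1,5) Rst that] p_def by simp
  have ph': "cond_cdf G k s t' x = (?R x - ?R s) ^ k / p'" if "s \<le> x" "x \<le> t'" for x
    using phi_in[OF order.strict_trans[OF st(1,2)] st(5) order.strict_trans[OF Rst Rtt] that] p'_def by simp
  have split: "{s<..<t'} = {s<..t} \<union> {t<..<t'}" using st by auto
  have i1: "set_integrable ?\<mu>' {s<..t} g"
    by (rule im_set_integrable[OF P', where u=s and w=t']) (use g(1) st in auto)
  have i2: "set_integrable ?\<mu>' {t<..<t'} g"
    by (rule im_set_integrable[OF P', where u=s and w=t']) (use g(1) st in auto)
  have E': "cond_exp_rec G k g s t' = (LINT x:{s<..t}|?\<mu>'. g x) + (LINT x:{t<..<t'}|?\<mu>'. g x)"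
    unfolding cond_exp_rec_def split by (rule set_integral_Un[OF _ i1 i2]) auto
  have meas: "(\<lambda>x. indicator {s<..t} x *\<^sub>R g x) \<in> borel_measurable borel"
    by (rule borel_measurable_continuous_on_indicator) (use st in \<open>auto intro!: continuous_on_subset[OF g(1)]\<close>)
  have "(LINT x:{s<..t}|?\<mu>'. g x) = (p / p') * (LINT x:{s<..t}|?\<mu>. g x)"
  proof (rule im_prop[OF P' P _ _ _ meas])
    fix x y assume "s \<le> x" "x \<le> y" "y \<le> t"
    then show "cond_cdf G k s t' y - cond_cdf G k s t' x = p / p' * (cond_cdf G k s t y - cond_cdf G k s t x)"
      using ph ph' st pp by (simp add: field_simps)
  qed (use st pp in auto)
  also have "(LINT x:{s<..t}|?\<mu>. g x) = cond_exp_rec G k g s t"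
    unfolding cond_exp_rec_def by (rule im_Ioc_Ioo[OF P]) (use st g(1) in \<open>auto intro: continuous_on_subset\<close>)
  finally have A: "(LINT x:{s<..t}|?\<mu>'. g x) = p / p' * cond_exp_rec G k g s t" .
  have d: "cond_cdf G k s t' t' - cond_cdf G k s t' t = 1 - p / p'"
  proof -
    have "cond_cdf G k s t' t' = 1" using st by (simp add: cond_cdf_def)
    moreover have "cond_cdf G k s t' t = p / p'" using ph'[of t] st unfolding p_def by simp
    ultimately show ?thesis by simp
  qed
  have gc: "continuous_on {t..t'} g" by (rule continuous_on_subset[OF g(1)]) (use st in auto)
  have gb: "g t \<le> g x \<and> g x \<le> g t'" if "x \<in> {t<..<t'}" for x using that g(2)[of t x] g(2)[of x t'] st by auto
  have B1: "g t * (1 - p/p') \<le> (LINT x:{t<..<t'}|?\<mu>'. g x)"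
    using im_bnd(1)[OF P', where u=t and w=t' and f=g and m="g t" and M="g t'"] gb st gc d
    by auto
  have B2: "(LINT x:{t<..<t'}|?\<mu>'. g x) \<le> g t' * (1 - p/p')"
    using im_bnd(2)[OF P', where u=t and w=t' and f=g and m="g t" and M="g t'"] gb st gc d
    by auto
  have eq: "p' * cond_exp_rec G k g s t' - p * cond_exp_rec G k g s t = p' * (LINT x:{t<..<t'}|?\<mu>'. g x)"
    unfolding E' A using pp by (simp add: field_simps)
  have "g t * (p' - p) = p' * (g t * (1 - p/p'))" using pp by (simp add: field_simps)
  also have "\<dots> \<le> p' * (LINT x:{t<..<t'}|?\<mu>'. g x)" using B1 pp by (intro mult_left_mono) auto
  finally show "g t * (p' - p) \<le> p' * cond_exp_rec G k g s t' - p * cond_exp_rec G k g s t" unfolding eq .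
  have "p' * (LINT x:{t<..<t'}|?\<mu>'. g x) \<le> p' * (g t' * (1 - p/p'))" using B2 pp by (intro mult_left_mono) auto
  also have "\<dots> = g t' * (p' - p)" using pp by (simp add: field_simps)
  finally show "p' * cond_exp_rec G k g s t' - p * cond_exp_rec G k g s t \<le> g t' * (p' - p)" unfolding eq .
qed



lemma zero_var:
  fixes D P g :: "real \<Rightarrow> real"
  assumes "x0 \<le> x1" "continuous_on {x0..x1} g"
    and Pm: "\<And>x y. x0 \<le> x \<Longrightarrow> x \<le> y \<Longrightarrow> y \<le> x1 \<Longrightarrow> P x \<le> P y"
    and H: "\<And>x y. x0 \<le> x \<Longrightarrow> x < y \<Longrightarrow> y \<le> x1 \<Longrightarrow> \<bar>D y - D x\<bar> \<le> \<bar>g y - g x\<bar> * (P y - P x)"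
  shows "D x1 = D x0"
proof -
  have main: "\<bar>D x1 - D x0\<bar> \<le> \<epsilon> * (P x1 - P x0)" if "\<epsilon> > 0" for \<epsilon>
  proof -
    define S where "S = {y. x0 \<le> y \<and> y \<le> x1 \<and> \<bar>D y - D x0\<bar> \<le> \<epsilon> * (P y - P x0)}"
    have x0S: "x0 \<in> S" unfolding S_def using assms(1) by auto
    have bdd: "bdd_above S" unfolding S_def by (rule bdd_aboveI[of _ x1]) auto
    define m where "m = Sup S"
    have x0m: "x0 \<le> m" unfolding m_def by (rule cSup_upper[OF x0S bdd])
    have mx1: "m \<le> x1" unfolding m_def by (rule cSup_least) (use x0S S_def in auto)
    have mI: "m \<in> {x0..x1}" using x0m mx1 by auto
    obtain \<delta> where \<delta>: "\<delta> > 0" "\<And>y. y \<in> {x0..x1} \<Longrightarrow> dist y m < \<delta> \<Longrightarrow> dist (g y) (g m) < \<epsilon>"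
      using assms(2) mI \<open>\<epsilon> > 0\<close> unfolding continuous_on_iff by metis
    have mS: "m \<in> S"
    proof -
      have "m - \<delta> < m" using \<delta> by simp
      then obtain y where y: "y \<in> S" "m - \<delta> < y" using less_cSup_iff[of S "m - \<delta>"] x0S bdd m_def by blast
      have ym: "y \<le> m" unfolding m_def by (rule cSup_upper[OF y(1) bdd])
      show ?thesis
      proof (cases "y = m")
        case True then show ?thesis using y by simp
      next
        case False
        then have ylm: "y < m" using ym by simp
        have yI: "x0 \<le> y" "y \<le> x1" using y(1) S_def by auto
        have "\<bar>g m - g y\<bar> \<le> \<epsilon>" using \<delta>(2)[of y] yI y(2) ym mx1 by (auto simp: dist_real_def)
        moreover have "P y \<le> P m" using Pm[of y m] yI ylm mx1 by simp
        ultimately have "\<bar>g m - g y\<bar> * (P m - P y) \<le> \<epsilon> * (P m - P y)" by (intro mult_right_mono) auto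
        then have "\<bar>D m - D y\<bar> \<le> \<epsilon> * (P m - P y)" using H[of y m] yI ylm mx1 by simp
        moreover have "\<bar>D y - D x0\<bar> \<le> \<epsilon> * (P y - P x0)" using y(1) S_def by auto
        ultimately have "\<bar>D m - D x0\<bar> \<le> \<epsilon> * (P m - P x0)" by (simp add: algebra_simps)
        then show ?thesis unfolding S_def using x0m mx1 by auto
      qed
    qed
    have "m = x1"
    proof (rule ccontr)
      assume "m \<noteq> x1"
      then have mlt: "m < x1" using mx1 by simp
      define y where "y = min x1 (m + \<delta>/2)"
      have y: "m < y" "y \<le> x1" "dist y m < \<delta>" using mlt \<delta>(1) by (auto simp: y_def dist_real_def)
      have "\<bar>g y - g m\<bar> \<le> \<epsilon>" using \<delta>(2)[of y] y x0m by (auto simp: dist_real_def)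
      moreover have "P m \<le> P y" using Pm[of m y] y x0m by simp
      ultimately have "\<bar>g y - g m\<bar> * (P y - P m) \<le> \<epsilon> * (P y - P m)" by (intro mult_right_mono) auto
      then have "\<bar>D y - D m\<bar> \<le> \<epsilon> * (P y - P m)" using H[of m y] y x0m by simp
      moreover have "\<bar>D m - D x0\<bar> \<le> \<epsilon> * (P m - P x0)" using mS S_def by auto
      ultimately have "\<bar>D y - D x0\<bar> \<le> \<epsilon> * (P y - P x0)" by (simp add: algebra_simps)
      then have "y \<in> S" unfolding S_def using y x0m by auto
      then have "y \<le> m" unfolding m_def by (rule cSup_upper[OF _ bdd])
      then show False using y by simp
    qed
    then show ?thesis using mS S_def by auto
  qed
  have P01: "P x0 \<le> P x1" using Pm[of x0 x1] assms(1) by simp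
  show ?thesis
  proof (rule ccontr)
    assume ne: "D x1 \<noteq> D x0"
    show False
    proof (cases "P x1 = P x0")
      case True then show False using main[of 1] ne by simp
    next
      case False
      then have Pp: "P x1 - P x0 > 0" using P01 by simp
      define e where "e = \<bar>D x1 - D x0\<bar> / (2 * (P x1 - P x0))"
      have "e > 0" using ne Pp by (simp add: e_def)
      have "e * (P x1 - P x0) = \<bar>D x1 - D x0\<bar> / 2" using Pp by (simp add: e_def field_simps)
      with main[OF \<open>e > 0\<close>] have "\<bar>D x1 - D x0\<bar> \<le> \<bar>D x1 - D x0\<bar> / 2" by simp
      then show False using ne by simp
    qed
  qed
qed

lemma amgm_k:
  fixes a b :: real
  assumes "0 \<le> a" "0 \<le> b"
  shows "real (k+1) * a^k * b \<le> real k * a^(k+1) + b^(k+1)"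
proof (induction k)
  case 0 then show ?case by simp
next
  case (Suc k)
  have s: "0 \<le> (a - b) * (a^(k+1) - b^(k+1))"
  proof (cases "a \<le> b")
    case True
    then have "a^(k+1) \<le> b^(k+1)" using assms by (intro power_mono) auto
    then show ?thesis using True by (intro mult_nonpos_nonpos) auto
  next
    case False
    then have "b^(k+1) \<le> a^(k+1)" using assms by (intro power_mono) auto
    then show ?thesis using False by (intro mult_nonneg_nonneg) auto
  qed
  have i: "a * (real (k+1) * a^k * b) \<le> a * (real k * a^(k+1) + b^(k+1))"
    using Suc.IH assms by (intro mult_left_mono) auto
  have e1: "real (Suc k + 1) * a ^ Suc k * b = a * (real (k+1) * a^k * b) + a * a^k * b"
    by (simp add: algebra_simps)
  have e2: "real (Suc k) * a ^ (Suc k + 1) + b ^ (Suc k + 1) =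
     a * (real k * a^(k+1) + b^(k+1)) + (a - b) * (a^(k+1) - b^(k+1)) + a * a^k * b"
    by (simp add: algebra_simps)
  show ?case unfolding e1 e2 using i s by linarith
qed

lemma K_sand:
  fixes X Y C hz :: real and k :: nat
  assumes "0 \<le> X" "X \<le> Y" "0 \<le> C"
  defines "Kf \<equiv> \<lambda>Z. C * Z^k * (real k * (Z + hz) + hz) / (real k + 1)"
  shows "(X + hz) * (C * Y^k - C * X^k) \<le> Kf Y - Kf X"
    and "Kf Y - Kf X \<le> (Y + hz) * (C * Y^k - C * X^k)"
proof -
  have a1: "real (k+1) * Y^k * X \<le> real k * Y^(k+1) + X^(k+1)" using amgm_k assms by auto
  have a2: "real (k+1) * X^k * Y \<le> real k * X^(k+1) + Y^(k+1)" using amgm_k assms by auto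
  have kp: "real k + 1 > 0" by simp
  have key: "(real k + 1) * (Kf Y - Kf X) = C * (real k * (Y * Y^k - X * X^k)) + (real k + 1) * C * hz * (Y^k - X^k)"
  proof -
    have kz: "(real k + 1) * Kf Z = C * Z^k * (real k * (Z + hz) + hz)" for Z
      unfolding Kf_def using kp by simp
    show ?thesis unfolding right_diff_distrib kz by (simp add: algebra_simps)
  qed
  have d1: "(real k + 1) * ((Kf Y - Kf X) - (X + hz) * (C * Y^k - C * X^k)) =
     C * (real k * Y^(k+1) + X^(k+1) - real (k+1) * Y^k * X)"
    using key by (simp add: algebra_simps)
  have d2: "(real k + 1) * ((Y + hz) * (C * Y^k - C * X^k) - (Kf Y - Kf X)) =
     C * (real k * X^(k+1) + Y^(k+1) - real (k+1) * X^k * Y)"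
    using key by (simp add: algebra_simps)
  have "0 \<le> (real k + 1) * ((Kf Y - Kf X) - (X + hz) * (C * Y^k - C * X^k))"
    unfolding d1 using a1 assms by simp
  then show "(X + hz) * (C * Y^k - C * X^k) \<le> Kf Y - Kf X" using kp
    by (simp add: zero_le_mult_iff)
  have "0 \<le> (real k + 1) * ((Y + hz) * (C * Y^k - C * X^k) - (Kf Y - Kf X))"
    unfolding d2 using a2 assms by simp
  then show "Kf Y - Kf X \<le> (Y + hz) * (C * Y^k - C * X^k)" using kp
    by (simp add: zero_le_mult_iff)
qed

lemma slope_limit:
  fixes R g :: "real \<Rightarrow> real" and k :: nat
  assumes k: "k \<ge> 1" and cR: "isCont R t" and cg: "isCont g t" and Rst: "R s < R t"
    and ev: "eventually (\<lambda>t'. R t < R t' \<and>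
        real k * (R t - R s)^k * (g t' - g t) \<le> ((R t' - R s)^k - (R t - R s)^k) * (g t' - g s) \<and>
        ((R t' - R s)^k - (R t - R s)^k) * (g t - g s) \<le> real k * (R t' - R s)^k * (g t' - g t)) (at_right t)"
  shows "((\<lambda>t'. (g t' - g t) / (R t' - R t)) \<longlongrightarrow> (g t - g s) / (R t - R s)) (at_right t)"
proof -
  define a where "a = R s"
  define b where "b = R t"
  have ab: "0 < b - a" using Rst by (simp add: a_def b_def)
  define q where "q = (\<lambda>t'. ((R t' - a)^k - (b - a)^k) / (R t' - b))"
  define L where "L = (\<lambda>t'. q t' * (g t - g s) / (real k * (R t' - a)^k))"
  define U where "U = (\<lambda>t'. q t' * (g t' - g s) / (real k * (b - a)^k))"
  have Rlim: "(R \<longlongrightarrow> b) (at_right t)"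
    using cR unfolding b_def isCont_def by (rule filterlim_mono) (simp_all add: at_within_le_at)
  have glim: "(g \<longlongrightarrow> g t) (at_right t)"
    using cg unfolding isCont_def by (rule filterlim_mono) (simp_all add: at_within_le_at)
  have Rat: "filterlim R (at b) (at_right t)"
    by (rule filterlim_atI[OF Rlim]) (rule eventually_mono[OF ev], auto simp: b_def)
  have "((\<lambda>x. (x - a)^k) has_field_derivative real k * (b - a)^(k-1)) (at b)"
    by (auto intro!: derivative_eq_intros)
  then have "((\<lambda>y. ((y - a)^k - (b - a)^k) / (y - b)) \<longlongrightarrow> real k * (b - a)^(k-1)) (at b)"
    by (simp add: has_field_derivative_iff)
  from filterlim_compose[OF this Rat]
  have qlim: "(q \<longlongrightarrow> real k * (b - a)^(k-1)) (at_right t)" unfolding q_def .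
  have kk: "(b - a)^k = (b - a)^(k-1) * (b - a)" using k by (cases k) (auto simp: power_Suc2)
  have lim_val: "real k * (b - a)^(k-1) * (g t - g s) / (real k * (b - a)^k) = (g t - g s) / (b - a)"
    using ab k unfolding kk by (simp add: field_simps)
  have "(L \<longlongrightarrow> real k * (b - a)^(k-1) * (g t - g s) / (real k * (b - a)^k)) (at_right t)"
    unfolding L_def using ab k by (intro tendsto_intros qlim Rlim) auto
  then have Llim: "(L \<longlongrightarrow> (g t - g s) / (b - a)) (at_right t)" unfolding lim_val .
  have "(U \<longlongrightarrow> real k * (b - a)^(k-1) * (g t - g s) / (real k * (b - a)^k)) (at_right t)"
    unfolding U_def using ab k by (intro tendsto_intros qlim glim) auto
  then have Ulim: "(U \<longlongrightarrow> (g t - g s) / (b - a)) (at_right t)" unfolding lim_val .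
  have evL: "eventually (\<lambda>t'. L t' \<le> (g t' - g t) / (R t' - R t)) (at_right t)"
  proof (rule eventually_mono[OF ev])
    fix t' assume h: "R t < R t' \<and>
        real k * (R t - R s)^k * (g t' - g t) \<le> ((R t' - R s)^k - (R t - R s)^k) * (g t' - g s) \<and>
        ((R t' - R s)^k - (R t - R s)^k) * (g t - g s) \<le> real k * (R t' - R s)^k * (g t' - g t)"
    have pos: "0 < real k * (R t' - a)^k * (R t' - b)" using h ab k by (simp add: a_def b_def)
    have nz: "real k \<noteq> 0" "(R t' - a)^k \<noteq> 0" "R t' - R t \<noteq> 0" using h ab k by (auto simp: a_def b_def)
    have "L t' = ((R t' - a)^k - (b - a)^k) * (g t - g s) / (real k * (R t' - a)^k * (R t' - b))"
      unfolding L_def q_def by (simp add: field_simps)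
    also have "\<dots> \<le> real k * (R t' - a)^k * (g t' - g t) / (real k * (R t' - a)^k * (R t' - b))"
      using h pos by (intro divide_right_mono) (auto simp: a_def b_def)
    also have "\<dots> = (g t' - g t) / (R t' - R t)" using nz by (simp add: b_def)
    finally show "L t' \<le> (g t' - g t) / (R t' - R t)" .
  qed
  have evU: "eventually (\<lambda>t'. (g t' - g t) / (R t' - R t) \<le> U t') (at_right t)"
  proof (rule eventually_mono[OF ev])
    fix t' assume h: "R t < R t' \<and>
        real k * (R t - R s)^k * (g t' - g t) \<le> ((R t' - R s)^k - (R t - R s)^k) * (g t' - g s) \<and>
        ((R t' - R s)^k - (R t - R s)^k) * (g t - g s) \<le> real k * (R t' - R s)^k * (g t' - g t)"
    have pos: "0 < real k * (b - a)^k * (R t' - b)" using h ab k by (simp add: a_def b_def)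
    have "(g t' - g t) / (R t' - R t) = real k * (b - a)^k * (g t' - g t) / (real k * (b - a)^k * (R t' - b))"
      using h ab k by (simp add: b_def)
    also have "\<dots> \<le> ((R t' - a)^k - (b - a)^k) * (g t' - g s) / (real k * (b - a)^k * (R t' - b))"
      using h pos by (intro divide_right_mono) (auto simp: a_def b_def)
    also have "\<dots> = U t'" unfolding U_def q_def by (simp add: field_simps)
    finally show "(g t' - g t) / (R t' - R t) \<le> U t'" .
  qed
  show ?thesis unfolding a_def b_def[symmetric]
    using tendsto_sandwich[OF evL evU Llim Ulim] by (simp add: a_def b_def)
qed



lemma cdf_facts:
  assumes "cont_dist_fun G"
  shows "mono G" "continuous_on UNIV G" "\<And>x. 0 \<le> G x" "\<And>x. G x \<le> 1"
proof -
  show m: "mono G" and c: "continuous_on UNIV G" using assms by (auto simp: cont_dist_fun_def)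
  have l0: "(G \<longlongrightarrow> 0) at_bot" and l1: "(G \<longlongrightarrow> 1) at_top" using assms by (auto simp: cont_dist_fun_def)
  fix x
  show "0 \<le> G x"
  proof (rule tendsto_upperbound[OF l0])
    show "eventually (\<lambda>y. G y \<le> G x) at_bot" unfolding eventually_at_bot_linorder
      by (intro exI[of _ x]) (auto intro: monoD[OF m])
  qed simp
  show "G x \<le> 1"
  proof (rule tendsto_lowerbound[OF l1])
    show "eventually (\<lambda>y. G x \<le> G y) at_top" unfolding eventually_at_top_linorder
      by (intro exI[of _ x]) (auto intro: monoD[OF m])
  qed simp
qed

lemma G_lt1:
  assumes "mono G" "ereal x < rG G"
  shows "G x < 1"
proof -
  from assms(2) obtain z where z: "z \<in> {ereal y | y. G y < 1}" "ereal x < z"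
    unfolding rG_def less_Sup_iff by blast
  then obtain y where "z = ereal y" "G y < 1" by auto
  then show ?thesis using z monoD[OF assms(1), of x y] by auto
qed

lemma Dm_nbhd:
  assumes "lG G < ereal x" "ereal x < rG G"
  shows "\<exists>a b. a < x \<and> x < b \<and> (\<forall>y. a < y \<and> y < b \<longrightarrow> lG G < ereal y \<and> ereal y < rG G)"
proof -
  obtain a where a: "lG G < ereal a" "ereal a < ereal x" using ereal_dense2[OF assms(1)] by blast
  obtain b where b: "ereal x < ereal b" "ereal b < rG G" using ereal_dense2[OF assms(2)] by blast
  show ?thesis
  proof (intro exI conjI allI impI)
    show "a < x" "x < b" using a b by auto
  next
    fix y assume h: "a < y \<and> y < b"
    then have ay: "ereal a < ereal y" and yb: "ereal y < ereal b" by auto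
    show "lG G < ereal y" using a(1) ay by (rule order.strict_trans)
    show "ereal y < rG G" using yb b(2) by (rule order.strict_trans)
  qed
qed

lemma isCont_Dm:
  assumes "continuous_on {x. lG G < ereal x \<and> ereal x < rG G} g" "lG G < ereal x" "ereal x < rG G"
  shows "isCont g x"
proof -
  obtain a b where ab: "a < x" "x < b" "\<forall>y. a < y \<and> y < b \<longrightarrow> lG G < ereal y \<and> ereal y < rG G"
    using Dm_nbhd[OF assms(2,3)] by blast
  have "continuous_on {a<..<b} g" by (rule continuous_on_subset[OF assms(1)]) (use ab in auto)
  then show ?thesis using ab by (simp add: continuous_on_eq_continuous_at)
qed

lemma Dm_interval:
  assumes "lG G < ereal x" "ereal y < rG G" "x \<le> z" "z \<le> y"
  shows "lG G < ereal z \<and> ereal z < rG G"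
proof -
  have "ereal x \<le> ereal z" "ereal z \<le> ereal y" using assms(3,4) by auto
  then show ?thesis using assms(1,2) by (meson order_less_le_trans order_le_less_trans)
qed

lemma R_isCont:
  assumes "mono G" "continuous_on UNIV G" "G x < 1"
  shows "isCont (hazR G) x"
proof -
  have "isCont G x" using assms(2) by (simp add: continuous_on_eq_continuous_at)
  then show ?thesis unfolding hazR_def using assms(3)
    by (intro continuous_intros) auto
qed

lemma backward:
  fixes G g :: "real \<Rightarrow> real" and k :: nat and gl c :: real
  assumes cdf: "cont_dist_fun G" and k: "k \<ge> 1"
    and gc: "continuous_on {x. lG G < ereal x \<and> ereal x < rG G} g"
    and gm: "strict_mono_on {x. lG G < ereal x \<and> ereal x < rG G} g"
    and c: "c > 0"
    and HG: "\<forall>y. lG G < ereal y \<and> ereal y < rG G \<longrightarrow> G y = 1 - exp (- c * (g y - gl))"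
    and s: "lG G < ereal s" and t: "ereal t < rG G" and st: "s < t"
  shows "G s < G t \<and> cond_exp_rec G k g s t = (real k * g t + g s) / (real k + 1)"
proof -
  note cf = cdf_facts[OF cdf]
  let ?D = "{x. lG G < ereal x \<and> ereal x < rG G}"
  have inD: "x \<in> ?D" if "s \<le> x" "x \<le> t" for x using Dm_interval[OF s t that] by simp
  have gmon: "g x \<le> g y" if "s \<le> x" "x \<le> y" "y \<le> t" for x y
  proof (cases "x = y")
    case False
    then show ?thesis using gm inD[of x] inD[of y] that
      by (auto simp: strict_mono_on_def intro: less_imp_le)
  qed simp
  have gstr: "g x < g y" if "s \<le> x" "x < y" "y \<le> t" for x y
    using gm inD[of x] inD[of y] that by (auto simp: strict_mono_on_def)
  have Gf: "G x = 1 - exp (- c * (g x - gl))" if "s \<le> x" "x \<le> t" for x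
    using HG inD[OF that] by auto
  have Gstr: "G x < G y" if "s \<le> x" "x < y" "y \<le> t" for x y
    using Gf[of x] Gf[of y] gstr[OF that] that c by auto
  have Glt1: "G x < 1" if "s \<le> x" "x \<le> t" for x using Gf[OF that] by simp
  have Rf: "hazR G x = c * (g x - gl)" if "s \<le> x" "x \<le> t" for x
    using Gf[OF that] by (simp add: hazR_def)
  define P where "P = (\<lambda>x. (hazR G x - hazR G s) ^ k)"
  have Pf: "P x = c^k * (g x - g s)^k" if "s \<le> x" "x \<le> t" for x
  proof -
    have "hazR G x - hazR G s = c * (g x - g s)" using Rf[OF that] Rf[of s] st that by (simp add: algebra_simps)
    then show ?thesis unfolding P_def by (simp add: power_mult_distrib)
  qed
  define Kf where "Kf = (\<lambda>Z. c^k * Z^k * (real k * (Z + g s) + g s) / (real k + 1))"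
  define J where "J = (\<lambda>x. P x * cond_exp_rec G k g s x)"
  define D where "D = (\<lambda>x. J x - Kf (g x - g s))"
  have gcst: "continuous_on {s..y} g" if "y \<le> t" for y
    by (rule continuous_on_subset[OF gc]) (use inD that in auto)
  have Jb: "g x * (P y - P x) \<le> J y - J x \<and> J y - J x \<le> g y * (P y - P x)"
    if xy: "s \<le> x" "x < y" "y \<le> t" for x y
  proof (cases "x = s")
    case True
    have Ps: "P s = 0" unfolding P_def using k by simp
    have sy: "s < y" using xy True by simp
    have f1: "G y < 1" using Glt1[of y] xy by simp
    have f2: "G s < G y" using Gstr[of s y] sy xy by simp
    have f3: "continuous_on {s..y} g" using gcst xy by simp
    have f4: "g s \<le> g z \<and> g z \<le> g y" if "z \<in> {s<..<y}" for z
      using gmon[of s z] gmon[of z y] that xy by auto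
    have Eb: "g s \<le> cond_exp_rec G k g s y" "cond_exp_rec G k g s y \<le> g y"
      using E_bnd[OF cf(1,2) f1 sy k f2 f3 f4] by auto
    have P0: "0 \<le> P y" using Pf[of y] xy True gmon[of s y] c by simp
    have "g s * P y \<le> P y * cond_exp_rec G k g s y" "P y * cond_exp_rec G k g s y \<le> g y * P y"
      using mult_left_mono[OF Eb(1) P0] mult_left_mono[OF Eb(2) P0] by (simp_all add: mult.commute)
    then show ?thesis using True Ps unfolding J_def by simp
  next
    case False
    then have sx: "s < x" using xy by simp
    have f1: "G y < 1" using Glt1[of y] xy by simp
    have f2: "G s < G x" using Gstr[of s x] sx xy by simp
    have f3: "G x < G y" using Gstr[of x y] sx xy by simp
    have f4: "continuous_on {s..y} g" using gcst xy by simp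
    have f5: "g a \<le> g b" if "s \<le> a" "a \<le> b" "b \<le> y" for a b using gmon[of a b] that xy by simp
    note sw = sandwich[OF cf(1,2) sx xy(2) f2 f1 k f3 f4 f5]
    have "g x * (P y - P x) \<le> J y - J x" "J y - J x \<le> g y * (P y - P x)"
      unfolding J_def P_def using sw by (simp_all add: algebra_simps)
    then show ?thesis by simp
  qed
  have Kb: "g x * (P y - P x) \<le> Kf (g y - g s) - Kf (g x - g s) \<and>
      Kf (g y - g s) - Kf (g x - g s) \<le> g y * (P y - P x)"
    if xy: "s \<le> x" "x < y" "y \<le> t" for x y
  proof -
    have X: "0 \<le> g x - g s" "g x - g s \<le> g y - g s" using gmon[of s x] gmon[of x y] xy by auto
    note ks = K_sand[OF X, where C="c^k" and hz="g s" and k=k]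
    have "P y - P x = c^k * (g y - g s)^k - c^k * (g x - g s)^k" using Pf[of x] Pf[of y] xy by simp
    then show ?thesis using ks c unfolding Kf_def by simp
  qed
  have "D t = D s"
  proof (rule zero_var[of s t g P D])
    show "continuous_on {s..t} g" by (rule gcst) simp
  next
    fix x y assume xy: "s \<le> x" "x \<le> y" "y \<le> t"
    then show "P x \<le> P y" using Pf[of x] Pf[of y] gmon[of s x] gmon[of x y] c
      by (auto intro!: mult_left_mono power_mono)
  next
    fix x y assume xy: "s \<le> x" "x < y" "y \<le> t"
    have e: "(g y - g x) * (P y - P x) = g y * (P y - P x) - g x * (P y - P x)" by (simp add: algebra_simps)
    have "\<bar>D y - D x\<bar> \<le> (g y - g x) * (P y - P x)"
      using Jb[OF xy] Kb[OF xy] unfolding D_def e abs_le_iff by linarith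
    also have "\<dots> \<le> \<bar>g y - g x\<bar> * (P y - P x)"
      using Pf[of x] Pf[of y] gmon[of s x] gmon[of x y] c xy
      by (intro mult_right_mono) (auto intro!: mult_left_mono power_mono)
    finally show "\<bar>D y - D x\<bar> \<le> \<bar>g y - g x\<bar> * (P y - P x)" .
  qed (use st in simp)
  moreover have "D s = 0" unfolding D_def J_def P_def Kf_def using k by (simp add: zero_power)
  ultimately have JK: "J t = Kf (g t - g s)" unfolding D_def by simp
  have Wp: "0 < g t - g s" using gstr[of s t] st by simp
  have Pt: "P t = c^k * (g t - g s)^k" using Pf[of t] st by simp
  have Ppos: "0 < c^k * (g t - g s)^k" using Wp c by simp
  have "c^k * (g t - g s)^k * cond_exp_rec G k g s t =
      c^k * (g t - g s)^k * ((real k * g t + g s) / (real k + 1))"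
    using JK unfolding J_def Pt Kf_def by (simp add: algebra_simps)
  then have "cond_exp_rec G k g s t = (real k * g t + g s) / (real k + 1)"
  proof (rule mult_left_cancel[THEN iffD1, rotated])
    show "c^k * (g t - g s)^k \<noteq> 0" using Ppos by linarith
  qed
  then show ?thesis using Gstr[of s t] st by simp
qed

lemma sand_alg:
  fixes p p' a b b' :: real and k :: nat
  assumes h1: "b * (p' - p) \<le> p' * ((real k * b' + a) / (real k + 1)) - p * ((real k * b + a) / (real k + 1))"
    and h2: "p' * ((real k * b' + a) / (real k + 1)) - p * ((real k * b + a) / (real k + 1)) \<le> b' * (p' - p)"
  shows "real k * p * (b' - b) \<le> (p' - p) * (b' - a)" "(p' - p) * (b - a) \<le> real k * p' * (b' - b)"
proof -
  define Q where "Q = p' * ((real k * b' + a) / (real k + 1)) - p * ((real k * b + a) / (real k + 1))"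
  have kp: "real k + 1 > 0" by simp
  have id: "(real k + 1) * Q = p' * (real k * b' + a) - p * (real k * b + a)"
  proof -
    have "Q = (p' * (real k * b' + a) - p * (real k * b + a)) / (real k + 1)"
      unfolding Q_def by (simp add: diff_divide_distrib)
    then show ?thesis using kp by simp
  qed
  have "(real k + 1) * Q \<le> (real k + 1) * (b' * (p' - p))"
    using h2 kp unfolding Q_def[symmetric] by (intro mult_left_mono) auto
  then show "real k * p * (b' - b) \<le> (p' - p) * (b' - a)" unfolding id by (simp add: algebra_simps)
  have "(real k + 1) * (b * (p' - p)) \<le> (real k + 1) * Q"
    using h1 kp unfolding Q_def[symmetric] by (intro mult_left_mono) auto
  then show "(p' - p) * (b - a) \<le> real k * p' * (b' - b)" unfolding id by (simp add: algebra_simps)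
qed

lemma forward:
  fixes G g :: "real \<Rightarrow> real" and k :: nat and gl :: real
  assumes cdf: "cont_dist_fun G" and k: "k \<ge> 1"
    and gc: "continuous_on {x. lG G < ereal x \<and> ereal x < rG G} g"
    and gm: "strict_mono_on {x. lG G < ereal x \<and> ereal x < rG G} g"
    and glim: "(g \<longlongrightarrow> gl) (at_right_e (lG G))"
    and H: "\<forall>s t. lG G < ereal s \<and> ereal s < ereal t \<and> ereal t < rG G \<longrightarrow>
            G s < G t \<and> cond_exp_rec G k g s t = (real k * g t + g s) / (real k + 1)"
  shows "\<exists>c>0. \<forall>y. lG G < ereal y \<and> ereal y < rG G \<longrightarrow> G y = 1 - exp (- c * (g y - gl))"
proof (cases "\<exists>x. lG G < ereal x \<and> ereal x < rG G")
  case False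
  then show ?thesis by (intro exI[of _ 1]) auto
next
  case True
  note cf = cdf_facts[OF cdf]
  define Dm where "Dm = {x. lG G < ereal x \<and> ereal x < rG G}"
  let ?R = "hazR G"
  have inDm: "x \<in> Dm \<longleftrightarrow> lG G < ereal x \<and> ereal x < rG G" for x unfolding Dm_def by simp
  have Hs: "G s < G t" "cond_exp_rec G k g s t = (real k * g t + g s) / (real k + 1)"
    if "s \<in> Dm" "t \<in> Dm" "s < t" for s t
  proof -
    have "lG G < ereal s \<and> ereal s < ereal t \<and> ereal t < rG G" using that unfolding inDm by simp
    note HH = H[rule_format, OF this]
    show "G s < G t" using HH by (rule conjunct1)
    show "cond_exp_rec G k g s t = (real k * g t + g s) / (real k + 1)" using HH by (rule conjunct2)
  qed
  have Glt1: "G x < 1" if "x \<in> Dm" for x using G_lt1[OF cf(1)] that unfolding inDm by blast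
  have Rlt: "?R s < ?R t" if "s \<in> Dm" "t \<in> Dm" "s < t" for s t
    by (rule R_strict[of G t s, OF Glt1[OF that(2)] Hs(1)[OF that]])
  have intv: "z \<in> Dm" if "x \<in> Dm" "y \<in> Dm" "x \<le> z" "z \<le> y" for x y z
    using Dm_interval[of G x y z] that unfolding inDm by blast
  have gstr: "g x < g y" if "x \<in> Dm" "y \<in> Dm" "x < y" for x y
    using strict_mono_onD[OF gm] that unfolding Dm_def by blast
  have above: "\<exists>b>x. \<forall>y. x < y \<and> y < b \<longrightarrow> y \<in> Dm" if xD: "x \<in> Dm" for x
  proof -
    obtain a b where "a < x" "x < b" "\<forall>y. a < y \<and> y < b \<longrightarrow> lG G < ereal y \<and> ereal y < rG G"
      using Dm_nbhd[of G x] xD unfolding inDm by blast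
    then show ?thesis unfolding inDm by (intro exI[of _ b]) auto
  qed
  have below: "\<exists>a<x. \<forall>y. a < y \<and> y < x \<longrightarrow> y \<in> Dm" if xD: "x \<in> Dm" for x
  proof -
    obtain a b where "a < x" "x < b" "\<forall>y. a < y \<and> y < b \<longrightarrow> lG G < ereal y \<and> ereal y < rG G"
      using Dm_nbhd[of G x] xD unfolding inDm by blast
    then show ?thesis unfolding inDm by (intro exI[of _ a]) auto
  qed
  define sl where "sl = (\<lambda>a b. (g b - g a) / (?R b - ?R a))"
  have lim: "((\<lambda>t'. (g t' - g t) / (?R t' - ?R t)) \<longlongrightarrow> sl s t) (at_right t)"
    if st: "s \<in> Dm" "t \<in> Dm" "s < t" for s t
  proof -
    obtain b where b: "t < b" "\<And>y. t < y \<Longrightarrow> y < b \<Longrightarrow> y \<in> Dm" using above[OF st(2)] by blast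
    have ev: "eventually (\<lambda>t'. ?R t < ?R t' \<and>
        real k * (?R t - ?R s)^k * (g t' - g t) \<le> ((?R t' - ?R s)^k - (?R t - ?R s)^k) * (g t' - g s) \<and>
        ((?R t' - ?R s)^k - (?R t - ?R s)^k) * (g t - g s) \<le> real k * (?R t' - ?R s)^k * (g t' - g t)) (at_right t)"
    proof (rule eventually_mono[OF eventually_at_right_real[OF b(1)]])
      fix t' assume "t' \<in> {t<..<b}"
      then have tt: "t < t'" "t' \<in> Dm" using b by auto
      have f1: "G t' < 1" by (rule Glt1[OF tt(2)])
      have f2: "G t < G t'" by (rule Hs(1)[OF st(2) tt(2) tt(1)])
      have f3: "continuous_on {s..t'} g"
        by (rule continuous_on_subset[OF gc]) (use intv[OF st(1) tt(2)] in \<open>auto simp: Dm_def\<close>)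
      have f4: "g x \<le> g y" if "s \<le> x" "x \<le> y" "y \<le> t'" for x y
      proof (cases "x = y")
        case False then show ?thesis using gstr[of x y] intv[OF st(1) tt(2)] that by auto
      qed simp
      note sw = sandwich[OF cf(1,2) st(3) tt(1) Hs(1)[OF st] f1 k f2 f3 f4]
      have e1: "cond_exp_rec G k g s t = (real k * g t + g s) / (real k + 1)" by (rule Hs(2)[OF st])
      have e2: "cond_exp_rec G k g s t' = (real k * g t' + g s) / (real k + 1)"
        by (rule Hs(2)[OF st(1) tt(2)]) (use st tt in simp)
      note sa = sand_alg[OF sw[unfolded e1 e2]]
      show "?R t < ?R t' \<and>
        real k * (?R t - ?R s)^k * (g t' - g t) \<le> ((?R t' - ?R s)^k - (?R t - ?R s)^k) * (g t' - g s) \<and>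
        ((?R t' - ?R s)^k - (?R t - ?R s)^k) * (g t - g s) \<le> real k * (?R t' - ?R s)^k * (g t' - g t)"
        using sa Rlt[OF st(2) tt(2) tt(1)] by simp
    qed
    have cR: "isCont ?R t" by (rule R_isCont[OF cf(1,2) Glt1[OF st(2)]])
    have cg: "isCont g t" using isCont_Dm[OF gc] st(2) inDm by auto
    show ?thesis unfolding sl_def by (rule slope_limit[OF k cR cg Rlt[OF st] ev])
  qed
  have SL: "sl s1 t = sl s2 t" if "s1 \<in> Dm" "s2 \<in> Dm" "t \<in> Dm" "s1 < t" "s2 < t" for s1 s2 t
    using tendsto_unique[OF trivial_limit_at_right_real lim[of s1 t] lim[of s2 t]] that by simp
  have col: "sl s1 s2 = sl s1 t" if h: "s1 \<in> Dm" "t \<in> Dm" "s1 < s2" "s2 < t" for s1 s2 t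
  proof -
    have s2: "s2 \<in> Dm" using intv[OF h(1,2)] h by auto
    define lam where "lam = sl s1 t"
    have r1: "?R s1 < ?R t" "?R s2 < ?R t" "?R s1 < ?R s2" using Rlt h s2 by auto
    have "g t - g s1 = lam * (?R t - ?R s1)" using r1 unfolding lam_def sl_def by simp
    moreover have "g t - g s2 = lam * (?R t - ?R s2)"
      using r1 SL[OF h(1) s2 h(2)] h unfolding lam_def sl_def by (simp add: field_simps)
    ultimately have "g s2 - g s1 = lam * (?R s2 - ?R s1)" by (simp add: algebra_simps)
    then have "sl s1 s2 = lam" using r1 unfolding sl_def by simp
    then show ?thesis unfolding lam_def .
  qed
  obtain x0 where x0: "x0 \<in> Dm" using True inDm by blast
  obtain b0 where b0: "x0 < b0" "\<And>y. x0 < y \<Longrightarrow> y < b0 \<Longrightarrow> y \<in> Dm" using above[OF x0] by blast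
  define y0 where "y0 = (x0 + b0) / 2"
  have y0: "y0 \<in> Dm" "x0 < y0" using b0 by (auto simp: y0_def)
  define \<beta> where "\<beta> = sl x0 y0"
  have slope_all: "sl (min x0 y) (max x0 y) = \<beta>" if y: "y \<in> Dm" "y \<noteq> x0" for y
  proof (cases "x0 < y")
    case True
    then have mm: "min x0 y = x0" "max x0 y = y" by auto
    show ?thesis
    proof (cases "y < y0")
      case True then show ?thesis unfolding mm \<beta>_def using col[OF x0 y0(1) \<open>x0 < y\<close> True] by simp
    next
      case False
      show ?thesis
      proof (cases "y = y0")
        case True then show ?thesis unfolding mm \<beta>_def by simp
      next
        case False
        then have "y0 < y" using \<open>\<not> y < y0\<close> by simp
        then show ?thesis unfolding mm \<beta>_def using col[OF x0 y(1) y0(2)] by simp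
      qed
    qed
  next
    case False
    then have yx: "y < x0" using y by simp
    then have mm: "min x0 y = y" "max x0 y = x0" by auto
    have "sl y x0 = sl y y0" by (rule col[OF y(1) y0(1) yx y0(2)])
    also have "\<dots> = sl x0 y0" by (rule SL[OF y(1) x0 y0(1)]) (use yx y0 in auto)
    finally show ?thesis unfolding mm \<beta>_def .
  qed
  define \<alpha> where "\<alpha> = g x0 - \<beta> * ?R x0"
  have lin: "g y = \<alpha> + \<beta> * ?R y" if y: "y \<in> Dm" for y
  proof (cases "y = x0")
    case True then show ?thesis by (simp add: \<alpha>_def)
  next
    case False
    show ?thesis
    proof (cases "x0 < y")
      case True
      have "sl x0 y = \<beta>" using slope_all[OF y False] True by simp
      then show ?thesis using Rlt[OF x0 y True] unfolding sl_def \<alpha>_def by (simp add: field_simps)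
    next
      case False
      then have yx: "y < x0" using \<open>y \<noteq> x0\<close> by simp
      have "sl y x0 = \<beta>" using slope_all[OF y \<open>y \<noteq> x0\<close>] yx by simp
      then show ?thesis using Rlt[OF y x0 yx] unfolding sl_def \<alpha>_def by (simp add: field_simps)
    qed
  qed
  have \<beta>pos: "\<beta> > 0" unfolding \<beta>_def sl_def using gstr[OF x0 y0(1) y0(2)] Rlt[OF x0 y0(1) y0(2)] by simp
  have gl_eq: "gl = \<alpha>"
  proof -
    let ?F = "at_right_e (lG G)"
    have x0l: "lG G < ereal x0" using x0 inDm by simp
    have x0r: "ereal x0 < rG G" using x0 inDm by simp
    have G0: "((\<lambda>y. G y) \<longlongrightarrow> 0) ?F \<and> eventually (\<lambda>y. y \<in> Dm) ?F \<and> ?F \<noteq> bot"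
    proof (cases "lG G")
      case (real l)
      then have F: "?F = at_right l" by (simp add: at_right_e_def)
      have lx: "l < x0" using x0l real by simp
      have Gl: "G l = 0"
      proof (rule ccontr)
        assume "G l \<noteq> 0"
        then have "G l > 0" using cf(3)[of l] by simp
        have "isCont G l" using cf(2) by (simp add: continuous_on_eq_continuous_at)
        then have "(G \<longlongrightarrow> G l) (at_left l)" unfolding isCont_def
          by (rule filterlim_mono) (simp_all add: at_within_le_at)
        from order_tendstoD(1)[OF this \<open>G l > 0\<close>]
        have "eventually (\<lambda>y. 0 < G y \<and> y < l) (at_left l)"
          by (rule eventually_conj) (simp add: eventually_at_filter)
        then obtain y where y: "0 < G y" "y < l"
          using eventually_happens[of _ "at_left l"] by (auto simp: trivial_limit_at_left_real)
        then have "lG G \<le> ereal y" unfolding lG_def by (intro Inf_lower) auto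
        then show False using real y by simp
      qed
      have "isCont G l" using cf(2) by (simp add: continuous_on_eq_continuous_at)
      then have "(G \<longlongrightarrow> G l) (at_right l)" unfolding isCont_def
        by (rule filterlim_mono) (simp_all add: at_within_le_at)
      moreover have "eventually (\<lambda>y. y \<in> Dm) (at_right l)"
      proof (rule eventually_mono[OF eventually_at_right_real[OF lx]])
        fix y assume "y \<in> {l<..<x0}"
        then show "y \<in> Dm" unfolding inDm using real x0r
          by (auto intro: order_le_less_trans[of "ereal y" "ereal x0"])
      qed
      ultimately show ?thesis unfolding F using Gl by (simp add: trivial_limit_at_right_real)
    next
      case PInf then show ?thesis using x0l by simp
    next
      case MInf
      then have F: "?F = at_bot" by (simp add: at_right_e_def)
      have "(G \<longlongrightarrow> 0) at_bot" using cdf by (simp add: cont_dist_fun_def)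
      moreover have "eventually (\<lambda>y. y \<in> Dm) at_bot"
        unfolding eventually_at_bot_linorder
      proof (intro exI[of _ x0] allI impI)
        fix y assume "y \<le> x0"
        then show "y \<in> Dm" unfolding inDm using MInf x0r
          by (auto intro: order_le_less_trans[of "ereal y" "ereal x0"])
      qed
      ultimately show ?thesis unfolding F by simp
    qed
    have Rl: "(?R \<longlongrightarrow> 0) ?F"
    proof -
      have "((\<lambda>y. - ln (1 - G y)) \<longlongrightarrow> - ln (1 - 0)) ?F"
        using G0 by (intro tendsto_intros) auto
      then show ?thesis unfolding hazR_def by simp
    qed
    have "((\<lambda>y. \<alpha> + \<beta> * ?R y) \<longlongrightarrow> \<alpha> + \<beta> * 0) ?F" by (intro tendsto_intros Rl)
    then have "((\<lambda>y. \<alpha> + \<beta> * ?R y) \<longlongrightarrow> \<alpha>) ?F" by simp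
    moreover have "eventually (\<lambda>y. \<alpha> + \<beta> * ?R y = g y) ?F"
      using G0 by (auto elim!: eventually_mono simp: lin)
    ultimately have "(g \<longlongrightarrow> \<alpha>) ?F" by (rule Lim_transform_eventually)
    then show ?thesis using tendsto_unique glim G0 by blast
  qed
  show ?thesis
  proof (intro exI[of _ "1/\<beta>"] conjI allI impI)
    show "1/\<beta> > 0" using \<beta>pos by simp
  next
    fix y assume "lG G < ereal y \<and> ereal y < rG G"
    then have y: "y \<in> Dm" unfolding inDm .
    have "?R y = (g y - gl) / \<beta>" using lin[OF y] gl_eq \<beta>pos by (simp add: field_simps)
    moreover have "1 - G y > 0" using Glt1[OF y] by simp
    ultimately have "exp (- (1/\<beta>) * (g y - gl)) = 1 - G y"
    proof -
      assume a: "?R y = (g y - gl) / \<beta>" "1 - G y > 0"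
      have "- (1/\<beta>) * (g y - gl) = ln (1 - G y)" using a(1) unfolding hazR_def by simp
      then show ?thesis using a(2) by simp
    qed
    then show "G y = 1 - exp (- (1/\<beta>) * (g y - gl))" by simp
  qed
qed


theorem corollary1:
  fixes G g :: "real \<Rightarrow> real" and n k :: nat and gl :: real
  assumes "n \<ge> 2" and "1 \<le> k" and "k \<le> n - 1"
    and "cont_dist_fun G"
    and "continuous_on {x. lG G < ereal x \<and> ereal x < rG G} g"
    and "strict_mono_on {x. lG G < ereal x \<and> ereal x < rG G} g"
    and "(g \<longlongrightarrow> gl) (at_right_e (lG G))"
    and "filterlim g at_top (at_left_e (rG G))"
  shows "(\<forall>s t. lG G < ereal s \<and> ereal s < ereal t \<and> ereal t < rG G \<longrightarrow>
            G s < G t \<and>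
            cond_exp_rec G k g s t = (real k * g t + g s) / (real k + 1))
         \<longleftrightarrow>
         (\<exists>c>0. \<forall>y. lG G < ereal y \<and> ereal y < rG G \<longrightarrow>
            G y = 1 - exp (- c * (g y - gl)))"
proof
  assume H: "\<forall>s t. lG G < ereal s \<and> ereal s < ereal t \<and> ereal t < rG G \<longrightarrow>
            G s < G t \<and> cond_exp_rec G k g s t = (real k * g t + g s) / (real k + 1)"
  show "\<exists>c>0. \<forall>y. lG G < ereal y \<and> ereal y < rG G \<longrightarrow> G y = 1 - exp (- c * (g y - gl))"
    by (rule forward[OF assms(4) assms(2) assms(5) assms(6) assms(7) H])
next
  assume "\<exists>c>0. \<forall>y. lG G < ereal y \<and> ereal y < rG G \<longrightarrow> G y = 1 - exp (- c * (g y - gl))"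
  then obtain c where c: "c > 0" and HG: "\<forall>y. lG G < ereal y \<and> ereal y < rG G \<longrightarrow> G y = 1 - exp (- c * (g y - gl))"
    by blast
  show "\<forall>s t. lG G < ereal s \<and> ereal s < ereal t \<and> ereal t < rG G \<longrightarrow>
            G s < G t \<and> cond_exp_rec G k g s t = (real k * g t + g s) / (real k + 1)"
  proof (intro allI impI)
    fix s t assume st: "lG G < ereal s \<and> ereal s < ereal t \<and> ereal t < rG G"
    then have "s < t" by simp
    then show "G s < G t \<and> cond_exp_rec G k g s t = (real k * g t + g s) / (real k + 1)"
      using backward[OF assms(4) assms(2) assms(5) assms(6) c HG] st by blast
  qed
qed

end
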